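(* Let $R$ be a rational function with zero set $Z$ and pole set $P_R$. If $\mathcal S_1$ and $\mathcal S_2$ are two tube-log Riemann surfaces associated to the primitive $\int R(z)\,dz$, then $\mathcal S_1=\mathcal S_2$ as tube-log Riemann surfaces.
   Context: A tube-log Riemann surface is a Riemann surface $\mathcal S$ with a distinguished atlas of charts whose transition maps are translations, which is the closure of a disjoint union of open pieces each biholomorphic, with derivative identically $1$ in distinguished charts, to a slit building block (a complex plane, complex cylinder $\mathbb C/2\pi i\lambda\mathbb Z$, half-cylinder, log-polygon or quotiented log-polygon, minus a locally finite disjoint union of closed segments or half-lines), these maps extending injectively to the metric completions minus discrete sets. Because transition maps are translations, a holomorphic map into $\mathcal S$ has a well-defined derivative computed in distinguished charts. Two tube-log Riemann surfaces $\mathcal S_1,\mathcal S_2$ are equal if there is a biholomorphism $\psi:\mathcal S_1\to\mathcal S_2$ whose derivative in the distinguished charts is identically $1$. A tube-log Riemann surface $\mathcal S$ is associated to $\int R(z)\,dz$ if there is a biholomorphism $F:\overline{\mathbb C}-(Z\cup P_R)\to\mathcal S$ whose derivative in distinguished charts satisfies $F'(z)=R(z)$. *)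

theory Defs
  imports "HOL-Complex_Analysis.Complex_Analysis" "HOL-Computational_Algebra.Polynomial"
begin

definition translation_surface :: "'a topology \<Rightarrow> ('a set \<times> ('a \<Rightarrow> complex)) set \<Rightarrow> bool" where
  "translation_surface X A \<longleftrightarrow>
     Hausdorff_space X \<and> connected_space X \<and>
     (\<forall>(U, \<phi>) \<in> A. openin X U \<and> open (\<phi> ` U) \<and>
         homeomorphic_map (subtopology X U) (top_of_set (\<phi> ` U)) \<phi>) \<and>
     (\<forall>x \<in> topspace X. \<exists>(U, \<phi>) \<in> A. x \<in> U) \<and>
     (\<forall>(U, \<phi>) \<in> A. \<forall>(V, \<eta>) \<in> A. \<forall>x \<in> U \<inter> V.
         \<exists>W c. openin X W \<and> x \<in> W \<and> W \<subseteq> U \<inter> V \<and> (\<forall>y \<in> W. \<eta> y = \<phi> y + c))"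

definition surface_equal ::
  "'a topology \<Rightarrow> ('a set \<times> ('a \<Rightarrow> complex)) set \<Rightarrow>
   'b topology \<Rightarrow> ('b set \<times> ('b \<Rightarrow> complex)) set \<Rightarrow> bool" where
  "surface_equal X1 A1 X2 A2 \<longleftrightarrow>
     (\<exists>\<psi>. homeomorphic_map X1 X2 \<psi> \<and>
        (\<forall>(U, \<phi>) \<in> A1. \<forall>(V, \<eta>) \<in> A2. \<forall>x \<in> U. \<psi> x \<in> V \<longrightarrow>
           ((\<lambda>w. \<eta> (\<psi> (inv_into U \<phi> w))) has_field_derivative 1) (at (\<phi> x))))"

definition rat_fun :: "complex poly \<Rightarrow> complex poly \<Rightarrow> complex \<Rightarrow> complex" where
  "rat_fun p q z = poly p z / poly q z"

definition zero_set :: "complex poly \<Rightarrow> complex set" where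
  "zero_set p = {z. poly p z = 0}"

definition pole_set :: "complex poly \<Rightarrow> complex set" where
  "pole_set q = {z. poly q z = 0}"

text \<open>A surface is associated to the primitive of R(z) dz if there is a biholomorphism
  F from the sphere minus zeros and poles (the point at infinity being always a zero or
  pole of R(z) dz) onto it with derivative R in distinguished charts.\<close>

definition associated_to ::
  "complex poly \<Rightarrow> complex poly \<Rightarrow> 'a topology \<Rightarrow> ('a set \<times> ('a \<Rightarrow> complex)) set \<Rightarrow> bool" where
  "associated_to p q X A \<longleftrightarrow>
     (let \<Omega> = - (zero_set p \<union> pole_set q) in
      \<exists>F. homeomorphic_map (top_of_set \<Omega>) X F \<and>
        (\<forall>z \<in> \<Omega>. \<forall>(U, \<phi>) \<in> A. F z \<in> U \<longrightarrow>
           ((\<phi> \<circ> F) has_field_derivative rat_fun p q z) (at z)))"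

end

theory Submission
  imports Defs
begin

lemma core:
  fixes F1 :: "complex \<Rightarrow> 'a" and F2 :: "complex \<Rightarrow> 'b" and G :: "'a \<Rightarrow> complex"
  assumes Om: "open \<Omega>"
    and hm1: "homeomorphic_maps (top_of_set \<Omega>) X1 F1 G"
    and d1: "\<forall>z \<in> \<Omega>. \<forall>(U, \<phi>) \<in> A1. F1 z \<in> U \<longrightarrow> ((\<phi> \<circ> F1) has_field_derivative R z) (at z)"
    and d2: "\<forall>z \<in> \<Omega>. \<forall>(U, \<phi>) \<in> A2. F2 z \<in> U \<longrightarrow> ((\<phi> \<circ> F2) has_field_derivative R z) (at z)"
    and nz: "\<forall>z\<in>\<Omega>. R z \<noteq> 0"
    and UA: "(U,\<phi>) \<in> A1" and oU: "openin X1 U"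
    and hU: "homeomorphic_map (subtopology X1 U) (top_of_set (\<phi> ` U)) \<phi>"
    and VA: "(V,\<eta>) \<in> A2" and xU: "x \<in> U" and xV: "(F2 \<circ> G) x \<in> V"
  shows "((\<lambda>w. \<eta> ((F2 \<circ> G) (inv_into U \<phi> w))) has_field_derivative 1) (at (\<phi> x))"
proof -
  have Usub: "U \<subseteq> topspace X1" using oU by (simp add: openin_subset)
  have cF1: "continuous_map (top_of_set \<Omega>) X1 F1" and GF: "\<forall>z\<in>\<Omega>. G (F1 z) = z"
    and FG: "\<forall>y\<in>topspace X1. F1 (G y) = y" and cG: "continuous_map X1 (top_of_set \<Omega>) G"
    using hm1 by (auto simp: homeomorphic_maps_def)
  have xt: "x \<in> topspace X1" using xU Usub by auto
  define z where "z = G x"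
  have zO: "z \<in> \<Omega>" using cG xt unfolding z_def continuous_map_def by auto
  have Fz: "F1 z = x" using FG xt z_def by auto
  define N where "N = {z \<in> \<Omega>. F1 z \<in> U}"
  have "openin (top_of_set \<Omega>) N"
    using openin_continuous_map_preimage[OF cF1 oU] by (simp add: N_def)
  hence oN: "open N" using Om openin_open_trans by blast
  have zN: "z \<in> N" using zO Fz xU N_def by auto
  have inj: "inj_on \<phi> U"
    using homeomorphic_imp_injective_map[OF hU] Usub by (simp add: Int_absorb1)
  define g where "g w = G (inv_into U \<phi> w)" for w
  have dN: "\<And>y. y \<in> N \<Longrightarrow> ((\<phi> \<circ> F1) has_field_derivative R y) (at y)"
    using d1 UA unfolding N_def by auto
  have cont: "continuous_on N (\<phi> \<circ> F1)"
    by (meson DERIV_isCont continuous_at_imp_continuous_on dN)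
  have ginv: "\<And>y. y \<in> N \<Longrightarrow> g ((\<phi> \<circ> F1) y) = y"
    using inj GF unfolding g_def N_def by auto
  have Dg: "DERIV g ((\<phi> \<circ> F1) z) :> inverse (R z)"
    by (rule has_field_derivative_inverse_strong[OF dN[OF zN] _ oN zN cont ginv])
       (use nz zO in auto)
  have gz: "g ((\<phi> \<circ> F1) z) = z" using ginv zN by blast
  have D2: "((\<eta> \<circ> F2) has_field_derivative R z) (at (g ((\<phi> \<circ> F1) z)))"
    using d2 VA xV zO gz z_def by auto
  have "((\<eta> \<circ> F2) \<circ> g has_field_derivative R z * inverse (R z)) (at ((\<phi> \<circ> F1) z))"
    by (rule DERIV_chain[OF D2 Dg])
  moreover have "R z * inverse (R z) = 1" using nz zO by auto
  moreover have "(\<phi> \<circ> F1) z = \<phi> x" using Fz by simp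
  moreover have "(\<eta> \<circ> F2) \<circ> g = (\<lambda>w. \<eta> ((F2 \<circ> G) (inv_into U \<phi> w)))"
    by (auto simp: g_def fun_eq_iff)
  ultimately show ?thesis by simp
qed

theorem mainTheorem5:
  fixes p q :: "complex poly"
    and X1 :: "'a topology" and A1 :: "('a set \<times> ('a \<Rightarrow> complex)) set"
    and X2 :: "'b topology" and A2 :: "('b set \<times> ('b \<Rightarrow> complex)) set"
  assumes "q \<noteq> 0" and "coprime p q"
    and "translation_surface X1 A1" and "translation_surface X2 A2"
    and "associated_to p q X1 A1" and "associated_to p q X2 A2"
  shows "surface_equal X1 A1 X2 A2"
proof -
  define \<Omega> where "\<Omega> = - (zero_set p \<union> pole_set q)"
  obtain F1 where hF1: "homeomorphic_map (top_of_set \<Omega>) X1 F1"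
    and d1: "\<forall>z \<in> \<Omega>. \<forall>(U, \<phi>) \<in> A1. F1 z \<in> U \<longrightarrow> ((\<phi> \<circ> F1) has_field_derivative rat_fun p q z) (at z)"
    using assms(5) unfolding associated_to_def Let_def \<Omega>_def by blast
  obtain F2 where hF2: "homeomorphic_map (top_of_set \<Omega>) X2 F2"
    and d2: "\<forall>z \<in> \<Omega>. \<forall>(U, \<phi>) \<in> A2. F2 z \<in> U \<longrightarrow> ((\<phi> \<circ> F2) has_field_derivative rat_fun p q z) (at z)"
    using assms(6) unfolding associated_to_def Let_def \<Omega>_def by blast
  obtain G where hm1: "homeomorphic_maps (top_of_set \<Omega>) X1 F1 G"
    using hF1 homeomorphic_map_maps by blast
  have hG: "homeomorphic_map X1 (top_of_set \<Omega>) G"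
    using hm1 homeomorphic_maps_map by blast
  have hpsi: "homeomorphic_map X1 X2 (F2 \<circ> G)"
    using homeomorphic_map_compose[OF hG hF2] .
  have cl: "closed (zero_set p \<union> pole_set q)"
  proof -
    have "closed (pole_set q)"
      using poly_roots_finite[OF assms(1)] finite_imp_closed by (simp add: pole_set_def)
    moreover have "closed (zero_set p)"
    proof (cases "p = 0")
      case True then show ?thesis by (simp add: zero_set_def)
    next
      case False then show ?thesis
        using poly_roots_finite[OF False] finite_imp_closed by (simp add: zero_set_def)
    qed
    ultimately show ?thesis by blast
  qed
  have Om: "open \<Omega>" using cl unfolding \<Omega>_def by (rule open_Compl)
  have nz: "\<forall>z\<in>\<Omega>. rat_fun p q z \<noteq> 0"
    by (simp add: \<Omega>_def rat_fun_def zero_set_def pole_set_def)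
  show ?thesis
    unfolding surface_equal_def
  proof (intro exI conjI ballI impI allI, rule hpsi, clarify)
    fix U \<phi> V \<eta> x
    assume UA: "(U,\<phi>) \<in> A1" and VA: "(V,\<eta>) \<in> A2" and xU: "x \<in> U" and xV: "(F2 \<circ> G) x \<in> V"
    have oU: "openin X1 U" and hU: "homeomorphic_map (subtopology X1 U) (top_of_set (\<phi> ` U)) \<phi>"
      using assms(3) UA unfolding translation_surface_def by auto
    show "((\<lambda>w. \<eta> ((F2 \<circ> G) (inv_into U \<phi> w))) has_field_derivative 1) (at (\<phi> x))"
      by (rule core[OF Om hm1 d1 d2 nz UA oU hU VA xU xV])
  qed
qed

end
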